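(* Let $\alpha_1,\alpha_2>0$ satisfy $\alpha_1-\alpha_2\ge e\sinh 1$. Let $p$ be analytic in $\mathbb{D}$ with $p(0)=1$. If $$1+\alpha_1 zp'(z)+\alpha_2 z^2p''(z)\prec 1+\sin z,$$ then $p(z)\prec e^z$.
   Context: $\mathbb{D}$ is the open unit disk. For $g,h$ analytic in $\mathbb{D}$, $g\prec h$ means there is an analytic $w:\mathbb{D}\to\mathbb{D}$ with $w(0)=0$ and $g=h\circ w$. *)

theory Defs
  imports "HOL-Complex_Analysis.Complex_Analysis"
begin

abbreviation unit_disk :: "complex set" where
  "unit_disk \<equiv> ball 0 1"

definition subordinate :: "(complex \<Rightarrow> complex) \<Rightarrow> (complex \<Rightarrow> complex) \<Rightarrow> bool"
  (infix "\<prec>\<^sub>D" 50) where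
  "g \<prec>\<^sub>D h \<longleftrightarrow> (\<exists>w. w holomorphic_on unit_disk \<and> w ` unit_disk \<subseteq> unit_disk \<and> w 0 = 0 \<and>
      (\<forall>z\<in>unit_disk. g z = h (w z)))"

end

theory Submission imports Defs begin

lemma e_ge: "exp (1::real) \<ge> 2.7"
proof -
  have "(\<Sum>n<6. (1::real)^n /\<^sub>R fact n) \<le> (\<Sum>n. (1::real)^n /\<^sub>R fact n)"
    using summable_exp_generic[of "1::real"] by (intro sum_le_suminf) auto
  moreover have "(\<Sum>n<6. (1::real)^n /\<^sub>R fact n) = 163/60"
    by (simp add: lessThan_nat_numeral fact_numeral)
  ultimately show ?thesis by (simp add: exp_def)
qed

lemma sin_bound:
  fixes z :: complex assumes "norm z < 1"
  shows "norm (sin z) \<le> cosh (1::real)"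
proof -
  define x where "x = Re z" define y where "y = Im z"
  have y1: "\<bar>y\<bar> \<le> 1" using abs_Im_le_cmod[of z] assms y_def by linarith
  have cs: "- cos (2*x) \<le> 1" by simp
  have "exp (2*y) + inverse (exp (2*y)) \<le> exp 2 + inverse (exp 2)"
  proof -
    define s where "s = exp (2*\<bar>y\<bar>)"
    have s1: "1 \<le> s" unfolding s_def by simp
    have sE: "s \<le> exp 2" unfolding s_def using y1 by simp
    have eq: "exp (2*y) + inverse (exp (2*y)) = s + inverse s"
      unfolding s_def by (cases "y \<ge> 0") (auto simp: exp_minus)
    have "s + inverse s \<le> exp 2 + inverse (exp 2)"
    proof -
      have "exp 2 + inverse (exp 2) - (s + inverse s) = (exp 2 - s) * (1 - inverse (s * exp 2))"
        using s1 by (simp add: field_simps)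
      moreover have "1 \<le> s * exp 2" using s1 sE by (metis mult_mono one_le_exp_iff order_trans zero_le_numeral mult_1 zero_le_one)
      hence "inverse (s * exp 2) \<le> 1" by (metis inverse_le_1_iff)
      ultimately show ?thesis using sE
        by (metis diff_ge_0_iff_ge mult_nonneg_nonneg)
    qed
    then show ?thesis using eq by simp
  qed
  then have "norm (sin z) ^ 2 \<le> (exp 2 + inverse (exp 2) + 2) / 4"
    using norm_sin_squared[of z] cos_ge_minus_one[of "2*Re z"] unfolding x_def y_def by argo
  also have "\<dots> = cosh (1::real) ^ 2"
    by (simp add: cosh_def power2_eq_square field_simps exp_minus flip: exp_add)
  finally show ?thesis
    by (meson abs_le_square_iff abs_of_nonneg cosh_real_nonneg_le_iff norm_ge_zero power2_le_imp_le cosh_real_pos less_imp_le)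
qed

lemma ray_bound:
  fixes G :: "complex \<Rightarrow> complex" and a c M :: real
  assumes holG: "G holomorphic_on ball 0 1" and a: "a > 0" and c: "c > 0"
    and bnd: "\<And>\<zeta>. \<zeta> \<in> ball 0 1 \<Longrightarrow> norm (of_real a * \<zeta> * deriv G \<zeta> + of_real c * G \<zeta>) \<le> M"
    and z: "z \<in> ball 0 1"
  shows "norm (G z) \<le> M / c"
proof -
  define r where "r = (\<lambda>s::real. s powr (a/c))"
  define X where "X = (\<lambda>s::real. s *\<^sub>R G (of_real (r s) * z))"
  have r01: "0 \<le> r s \<and> r s \<le> 1" if "0 \<le> s" "s \<le> 1" for s
    unfolding r_def using that a c powr_mono2[of "a/c" s 1] by auto
  have inball: "of_real (r s) * z \<in> ball 0 1" if "0 \<le> s" "s \<le> 1" for s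
  proof -
    have "norm (of_real (r s) * z) = r s * norm z" using r01[OF that] by (simp add: norm_mult)
    also have "\<dots> \<le> norm z" using r01[OF that] by (simp add: mult_left_le_one_le)
    finally show ?thesis using z by simp
  qed
  have contG: "continuous_on (ball 0 1) G" using holG holomorphic_on_imp_continuous_on by blast
  have contr: "continuous_on {0..1} r" unfolding r_def
    using a c by (intro continuous_on_powr') (auto intro: continuous_intros)
  have cont: "continuous_on {0..1} X" unfolding X_def
    apply (intro continuous_intros continuous_on_compose2[OF contG])
    using contr inball by (auto intro: continuous_intros)
  have der: "(X has_vector_derivative (G (of_real (r s) * z) + of_real (a/c) * (of_real (r s) * z) * deriv G (of_real (r s) * z))) (at s)"
    if s: "0 < s" "s < 1" for s
  proof -
    define \<zeta> where "\<zeta> = of_real (r s) * z"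
    have \<zeta>b: "\<zeta> \<in> ball 0 1" unfolding \<zeta>_def using inball s by auto
    have dr: "(r has_real_derivative (a/c) * s powr (a/c - 1)) (at s)"
      unfolding r_def using s by (auto intro!: derivative_eq_intros)
    have d1: "((\<lambda>s. of_real (r s) * z) has_vector_derivative (of_real ((a/c) * s powr (a/c - 1)) * z)) (at s)"
      using has_vector_derivative_mult_left[OF has_vector_derivative_of_real[OF dr], of z] by simp
    have dG: "(G has_field_derivative deriv G \<zeta>) (at \<zeta>)"
      using holG \<zeta>b by (meson holomorphic_derivI open_ball)
    have d2: "((\<lambda>s. G (of_real (r s) * z)) has_vector_derivative (of_real ((a/c) * s powr (a/c - 1)) * z) * deriv G \<zeta>) (at s)"
      using field_vector_diff_chain_at[OF d1, of G "deriv G \<zeta>"] dG unfolding \<zeta>_def by (simp add: o_def)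
    have d3: "(X has_vector_derivative (s *\<^sub>R ((of_real ((a/c) * s powr (a/c - 1)) * z) * deriv G \<zeta>) + 1 *\<^sub>R G \<zeta>)) (at s)"
      using has_vector_derivative_scaleR[OF DERIV_ident d2] unfolding X_def \<zeta>_def by simp
    have "s *\<^sub>R ((of_real ((a/c) * s powr (a/c - 1)) * z) * deriv G \<zeta>) = of_real (a/c) * \<zeta> * deriv G \<zeta>"
    proof -
      have "s * s powr (a/c - 1) = r s" unfolding r_def using s
        by (simp add: powr_diff field_simps)
      hence "s * ((a/c) * s powr (a/c - 1)) = (a/c) * r s" by (simp add: algebra_simps)
      thus ?thesis unfolding \<zeta>_def scaleR_conv_of_real
        by (metis (no_types, lifting) mult.assoc of_real_mult)
    qed
    then show ?thesis using d3 unfolding \<zeta>_def by (metis add.commute scaleR_one)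
  qed
  have "norm (X 1 - X 0) \<le> (M/c) * 1 - (M/c) * 0"
  proof (rule differentiable_bound_general[OF zero_less_one cont _ der])
    show "continuous_on {0..1} (\<lambda>s. (M/c) * s)" by (intro continuous_intros)
    fix s :: real assume s: "0 < s" "s < 1"
    show "((\<lambda>s. M / c * s) has_vector_derivative M/c) (at s)"
      unfolding has_real_derivative_iff_has_vector_derivative[symmetric]
      using DERIV_cmult[OF DERIV_ident, of "M/c"] by simp
    define \<zeta> where "\<zeta> = of_real (r s) * z"
    have \<zeta>b: "\<zeta> \<in> ball 0 1" unfolding \<zeta>_def using inball s by auto
    have "G \<zeta> + of_real (a/c) * \<zeta> * deriv G \<zeta> = (of_real a * \<zeta> * deriv G \<zeta> + of_real c * G \<zeta>) / of_real c"
      using c by (simp add: field_simps of_real_eq_0_iff)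
    hence "norm (G \<zeta> + of_real (a/c) * \<zeta> * deriv G \<zeta>) \<le> M / c"
      using bnd[OF \<zeta>b] c by (simp add: norm_divide divide_right_mono)
    then show "norm (G (of_real (r s) * z) + of_real (a/c) * (of_real (r s) * z) * deriv G (of_real (r s) * z)) \<le> M/c"
      unfolding \<zeta>_def .
  qed
  moreover have "X 1 = G z" "X 0 = 0" unfolding X_def r_def by auto
  ultimately show ?thesis by simp
qed
lemma e_ineq: "exp 1 * sinh 1 > 2 * cosh (1::real)"
proof -
  define e where "e = exp (1::real)"
  have e: "e \<ge> 2.7" using e_ge e_def by simp
  have h1: "e * (e - 2) \<ge> 2.7 * 0.7" using e by (intro mult_mono) auto
  have h2: "e * (e * (e - 2) - 1) \<ge> 2.7 * 0.89" using e h1 by (intro mult_mono) auto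
  have "e * e * e - e > 2 * e * e + 2" using h2 by (simp add: algebra_simps)
  hence pos: "(e*e*e - e - (2*e*e + 2)) / (2*e) > 0" using e by (intro divide_pos_pos) auto
  have "e * ((e - inverse e)/2) - 2 * ((e + inverse e)/2) = (e*e*e - e - (2*e*e + 2)) / (2*e)"
    using e by (simp add: field_simps)
  hence "e * ((e - inverse e)/2) > 2 * ((e + inverse e)/2)" using pos by linarith
  thus ?thesis unfolding e_def sinh_def cosh_def by (simp add: exp_minus)
qed

theorem theorem4p7:
  fixes \<alpha>1 \<alpha>2 :: real and p :: "complex \<Rightarrow> complex"
  assumes "\<alpha>1 > 0" and "\<alpha>2 > 0"
    and "\<alpha>1 - \<alpha>2 \<ge> exp 1 * sinh 1"
    and "p holomorphic_on unit_disk" and "p 0 = 1"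
    and "(\<lambda>z. 1 + of_real \<alpha>1 * z * deriv p z + of_real \<alpha>2 * z\<^sup>2 * deriv (deriv p) z)
           \<prec>\<^sub>D (\<lambda>z. 1 + sin z)"
  shows "p \<prec>\<^sub>D exp"
proof -
  obtain w where wh: "w holomorphic_on unit_disk" and wb: "w ` unit_disk \<subseteq> unit_disk"
    and w0: "w 0 = 0" and weq: "\<And>z. z \<in> unit_disk \<Longrightarrow>
       1 + of_real \<alpha>1 * z * deriv p z + of_real \<alpha>2 * z\<^sup>2 * deriv (deriv p) z = 1 + sin (w z)"
    using assms(6) unfolding subordinate_def by blast
  define c where "c = \<alpha>1 - \<alpha>2"
  have c2: "c > 2 * cosh 1" using e_ineq assms(3) c_def by linarith
  have cpos: "c > 0" using c2 cosh_real_pos[of 1] by linarith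
  have hp': "deriv p holomorphic_on unit_disk" using holomorphic_deriv[OF assms(4) open_ball] .
  have dp: "(p has_field_derivative deriv p z) (at z)" if "z \<in> unit_disk" for z
    using assms(4) that by (meson holomorphic_derivI open_ball)
  have dp': "(deriv p has_field_derivative deriv (deriv p) z) (at z)" if "z \<in> unit_disk" for z
    using hp' that by (meson holomorphic_derivI open_ball)
  define G where "G = (\<lambda>z. z * deriv p z)"
  have dG: "(G has_field_derivative (deriv p z + z * deriv (deriv p) z)) (at z)" if "z \<in> unit_disk" for z
    unfolding G_def using DERIV_mult[OF DERIV_ident dp'[OF that]] by (simp add: algebra_simps)
  have hG: "G holomorphic_on unit_disk" unfolding G_def by (intro holomorphic_on_mult holomorphic_on_ident hp')
  have Gb: "norm (G z) \<le> cosh 1 / c" if z: "z \<in> unit_disk" for z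
  proof (rule ray_bound[OF hG assms(2) cpos _ z])
    fix \<zeta> :: complex assume \<zeta>: "\<zeta> \<in> unit_disk"
    have "of_real \<alpha>2 * \<zeta> * deriv G \<zeta> + of_real c * G \<zeta>
        = of_real \<alpha>1 * \<zeta> * deriv p \<zeta> + of_real \<alpha>2 * \<zeta>\<^sup>2 * deriv (deriv p) \<zeta>"
      using DERIV_imp_deriv[OF dG[OF \<zeta>]] unfolding G_def c_def
      by (simp add: algebra_simps power2_eq_square)
    also have "\<dots> = sin (w \<zeta>)" using weq[OF \<zeta>] by simp
    finally show "norm (of_real \<alpha>2 * \<zeta> * deriv G \<zeta> + of_real c * G \<zeta>) \<le> cosh 1"
      using sin_bound[of "w \<zeta>"] wb \<zeta> mem_ball_0 by (metis image_subset_iff)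
  qed
  have Gh: "norm (G z) < 1/2" if "z \<in> unit_disk" for z
  proof -
    have "cosh 1 / c < 1/2" using c2 cpos by (simp add: field_simps)
    thus ?thesis using Gb[OF that] by linarith
  qed
  define f where "f = (\<lambda>z. 2 * G z)"
  have hf: "f holomorphic_on unit_disk" unfolding f_def by (rule holomorphic_on_mult[OF holomorphic_on_const hG])
  have f0: "f 0 = 0" unfolding f_def G_def by simp
  have fb: "norm (f z) < 1" if "norm z < 1" for z
    using Gh[of z] that unfolding f_def by (simp add: norm_mult)
  have p'b: "norm (deriv p z) \<le> 1/2" if z: "z \<in> unit_disk" for z
  proof (cases "z = 0")
    case True
    have "(f has_field_derivative 2 * (deriv p 0 + 0 * deriv (deriv p) 0)) (at 0)"
      unfolding f_def using DERIV_cmult[OF dG[of 0], of 2] by simp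
    hence "deriv f 0 = 2 * deriv p 0" by (simp add: DERIV_imp_deriv)
    thus ?thesis using Schwarz_Lemma(2)[OF hf f0 fb, of 0] True by (simp add: norm_mult)
  next
    case False
    have "norm (f z) \<le> norm z" using Schwarz_Lemma(1)[OF hf f0 fb] z by simp
    hence "2 * norm z * norm (deriv p z) \<le> norm z * 1"
      unfolding f_def G_def by (simp add: norm_mult)
    thus ?thesis using False by (simp add: mult.assoc)
  qed
  have pb: "norm (p z - 1) < 1/2" if z: "z \<in> unit_disk" for z
  proof -
    have "norm (p z - p 0) \<le> 1/2 * norm (z - 0)"
      by (rule field_differentiable_bound[OF convex_ball _ p'b z])
         (use dp in \<open>auto intro: has_field_derivative_at_within\<close>)
    thus ?thesis using z assms(5) by simp
  qed
  have nonpos: "p z \<notin> \<real>\<^sub>\<le>\<^sub>0" if "z \<in> unit_disk" for z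
  proof
    assume "p z \<in> \<real>\<^sub>\<le>\<^sub>0"
    hence "Re (p z) \<le> 0" by (auto simp: complex_nonpos_Reals_iff)
    moreover have "\<bar>Re (p z - 1)\<bar> < 1/2" using pb[OF that] abs_Re_le_cmod le_less_trans by blast
    ultimately show False by simp
  qed
  show ?thesis unfolding subordinate_def
  proof (intro exI[of _ "\<lambda>z. Ln (p z)"] conjI ballI)
    show "(\<lambda>z. Ln (p z)) holomorphic_on unit_disk"
      using nonpos assms(4) by (intro holomorphic_on_Ln') auto
    show "(\<lambda>z. Ln (p z)) ` unit_disk \<subseteq> unit_disk"
    proof clarify
      fix z :: complex assume z: "z \<in> unit_disk"
      have "norm (Ln (1 + (p z - 1))) \<le> 2 * norm (p z - 1)" using pb[OF z] by (intro norm_Ln_le)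
      thus "Ln (p z) \<in> unit_disk" using pb[OF z] by simp
    qed
    show "Ln (p 0) = 0" using assms(5) by simp
    fix z :: complex assume "z \<in> unit_disk"
    hence "p z \<noteq> 0" using pb by force
    thus "p z = exp (Ln (p z))" by simp
  qed
qed
end
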